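(* Let $q > 5$ be a Sophie Germain prime, let $p = 2q+1$, and suppose $z(p) \mid \pi(q)$. Then $\pi(q)/z(p)$ is an odd integer.
   Context: A Sophie Germain prime is a prime $q$ with $2q+1$ prime. $F_n$ denotes the $n$-th Fibonacci number ($F_0=0$, $F_1=1$). For a prime $p$, $z(p)$ is the least positive integer $k$ with $p \mid F_k$. $\pi(n)$ is the Pisano period, the least period of $(F_m \bmod n)_{m\ge0}$. *)

theory Defs
  imports "HOL-Number_Theory.Number_Theory"
begin

definition fib_rank :: "nat \<Rightarrow> nat" where
  "fib_rank p = (LEAST k. 0 < k \<and> p dvd fib k)"

definition pisano :: "nat \<Rightarrow> nat" where
  "pisano n = (LEAST k. 0 < k \<and> (\<forall>m. fib (m + k) mod n = fib m mod n))"

end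

theory Submission
  imports Defs
begin


definition SS :: "nat \<Rightarrow> int" where
  "SS n = (\<Sum>j\<le>n. int (n choose (2*j+1)) * 5^j)"
definition TT :: "nat \<Rightarrow> int" where
  "TT n = (\<Sum>j\<le>n. int (n choose (2*j)) * 5^j)"

lemma sum_ext_zero:
  fixes f :: "nat \<Rightarrow> int"
  assumes "n \<le> N" "\<And>j. j > n \<Longrightarrow> f j = (0::int)"
  shows "(\<Sum>j\<le>n. f j) = (\<Sum>j\<le>N. f j)"
proof (rule sum.mono_neutral_left)
  show "\<forall>i\<in>{..N} - {..n}. f i = 0"
  proof
    fix i assume "i \<in> {..N} - {..n}"
    then have "n < i" by auto
    then show "f i = 0" by (rule assms(2))
  qed
qed (use assms in auto)

lemma SS_ext: "n \<le> N \<Longrightarrow> SS n = (\<Sum>j\<le>N. int (n choose (2*j+1)) * 5^j)"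
  unfolding SS_def by (rule sum_ext_zero) auto
lemma TT_ext: "n \<le> N \<Longrightarrow> TT n = (\<Sum>j\<le>N. int (n choose (2*j)) * 5^j)"
  unfolding TT_def by (rule sum_ext_zero) auto

lemma SS_Suc: "SS (Suc n) = SS n + TT n"
proof -
  have "SS (Suc n) = (\<Sum>j\<le>Suc n. int (n choose (2*j+1)) * 5^j + int (n choose (2*j)) * 5^j)"
    unfolding SS_def by (rule sum.cong) (auto simp: algebra_simps)
  also have "\<dots> = SS n + TT n"
    by (simp add: sum.distrib SS_ext[of n "Suc n"] TT_ext[of n "Suc n"])
  finally show ?thesis .
qed

lemma TT_Suc: "TT (Suc n) = TT n + 5 * SS n"
proof -
  have "TT (Suc n) = 1 + (\<Sum>j\<le>n. int (Suc n choose (2*Suc j)) * 5^Suc j)"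
    unfolding TT_def sum.atMost_Suc_shift by simp
  also have "\<dots> = 1 + (\<Sum>j\<le>n. int (n choose (2*Suc j)) * 5^Suc j + 5 * (int (n choose (2*j+1)) * 5^j))"
    by (rule arg_cong[where f="\<lambda>x. 1 + x"], rule sum.cong) (auto simp: algebra_simps)
  also have "\<dots> = (1 + (\<Sum>j\<le>n. int (n choose (2*Suc j)) * 5^Suc j)) + 5 * SS n"
    by (simp add: sum.distrib sum_distrib_left SS_def)
  also have "1 + (\<Sum>j\<le>n. int (n choose (2*Suc j)) * 5^Suc j) = TT (Suc n) - TT (Suc n) + TT n"
  proof -
    have "TT n = (\<Sum>j\<le>Suc n. int (n choose (2*j)) * 5^j)" by (rule TT_ext) auto
    also have "\<dots> = 1 + (\<Sum>j\<le>n. int (n choose (2*Suc j)) * 5^Suc j)"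
      unfolding sum.atMost_Suc_shift by simp
    finally show ?thesis by simp
  qed
  finally show ?thesis by simp
qed

lemma SS_rec: "SS (Suc (Suc n)) = 2 * SS (Suc n) + 4 * SS n"
  using SS_Suc[of "Suc n"] SS_Suc[of n] TT_Suc[of n] by simp

lemma SS_fib: "2 * SS n = 2^n * int (fib n)"
proof (induction n rule: fib.induct)
  case 1 then show ?case by (simp add: SS_def)
next
  case 2 then show ?case by (simp add: SS_def)
next
  case (3 n)
  then show ?case by (simp add: SS_rec algebra_simps)
qed



lemma SS_prime:
  assumes "prime r" "odd r"
  shows "[SS r = 5^((r-1) div 2)] (mod int r)"
proof -
  define h where "h = (r-1) div 2"
  have r1: "2*h+1 = r" using assms(2) h_def by presburger
  have hin: "h \<in> {..r}" using r1 by auto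
  have "SS r = int (r choose (2*h+1)) * 5^h + (\<Sum>j\<in>{..r}-{h}. int (r choose (2*j+1)) * 5^j)"
    unfolding SS_def using hin by (simp add: sum.remove)
  also have "int (r choose (2*h+1)) * 5^h = 5^h" using r1 by simp
  finally have e: "SS r - 5^h = (\<Sum>j\<in>{..r}-{h}. int (r choose (2*j+1)) * 5^j)" by simp
  have "int r dvd (\<Sum>j\<in>{..r}-{h}. int (r choose (2*j+1)) * 5^j)"
  proof (rule dvd_sum)
    fix j assume j: "j \<in> {..r}-{h}"
    show "int r dvd int (r choose (2*j+1)) * 5^j"
    proof (cases "2*j+1 < r")
      case True
      then have "r dvd (r choose (2*j+1))" using assms(1) by (intro dvd_choose_prime) auto
      then show ?thesis by (simp add: int_dvd_int_iff)
    next
      case False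
      then have "2*j+1 > r" using j r1 by auto
      then show ?thesis by (simp add: binomial_eq_0)
    qed
  qed
  then show ?thesis using e by (simp add: cong_iff_dvd_diff h_def)
qed

lemma TT_prime:
  assumes "prime r" "odd r"
  shows "[TT r = 1] (mod int r)"
proof -
  have "TT r = int (r choose (2*0)) * 5^0 + (\<Sum>j\<in>{..r}-{0}. int (r choose (2*j)) * 5^j)"
    unfolding TT_def by (subst sum.remove[of _ 0]) auto
  then have e: "TT r - 1 = (\<Sum>j\<in>{..r}-{0}. int (r choose (2*j)) * 5^j)" by simp
  have "int r dvd (\<Sum>j\<in>{..r}-{0}. int (r choose (2*j)) * 5^j)"
  proof (rule dvd_sum)
    fix j assume j: "j \<in> {..r}-{0}"
    show "int r dvd int (r choose (2*j)) * 5^j"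
    proof (cases "2*j < r")
      case True
      then have "r dvd (r choose (2*j))" using assms(1) j by (intro dvd_choose_prime) auto
      then show ?thesis by (simp add: int_dvd_int_iff)
    next
      case False
      then have "2*j > r" using assms(2) by (cases "2*j = r") auto
      then show ?thesis by (simp add: binomial_eq_0)
    qed
  qed
  then show ?thesis using e by (simp add: cong_iff_dvd_diff)
qed

lemma fermat2:
  assumes "prime r" "odd r"
  shows "[(2::int)^(r-1) = 1] (mod int r)"
proof -
  have "\<not> r dvd 2" using assms primes_dvd_imp_eq[of r 2] two_is_prime_nat by auto
  then have "[2^(r-1) = 1] (mod r)" using assms by (intro fermat_theorem) auto
  then have "[int (2^(r-1)) = int 1] (mod int r)" using cong_int_iff by blast
  then show ?thesis by simp
qed

lemma fib_prime_cong:
  assumes "prime r" "odd r"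
  shows "[int (fib r) = 5^((r-1) div 2)] (mod int r)"
    and "[2 * int (fib (Suc r)) = 5^((r-1) div 2) + 1] (mod int r)"
proof -
  have r0: "r = Suc (r-1)" using assms prime_gt_0_nat by simp
  have "2 * SS r = 2 * (2^(r-1) * int (fib r))"
    using SS_fib[of r] r0 by (metis power_Suc mult.assoc)
  then have s1: "SS r = 2^(r-1) * int (fib r)" by simp
  have "2 * SS (Suc r) = 2 * (2 * 2^(r-1) * int (fib (Suc r)))"
    using SS_fib[of "Suc r"] r0 by (metis power_Suc mult.assoc)
  then have s2: "SS (Suc r) = 2 * 2^(r-1) * int (fib (Suc r))" by simp
  have f: "[(2::int)^(r-1) = 1] (mod int r)" using fermat2 assms by blast
  have "[SS r = 1 * int (fib r)] (mod int r)" unfolding s1 by (intro cong_mult f cong_refl)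
  then show "[int (fib r) = 5^((r-1) div 2)] (mod int r)"
    using SS_prime[OF assms] by (metis cong_sym cong_trans mult_1)
  have "[SS (Suc r) = 2 * 1 * int (fib (Suc r))] (mod int r)" unfolding s2 by (intro cong_mult f cong_refl)
  moreover have "[SS (Suc r) = 5^((r-1) div 2) + 1] (mod int r)"
    unfolding SS_Suc using SS_prime[OF assms] TT_prime[OF assms] by (intro cong_add)
  ultimately show "[2 * int (fib (Suc r)) = 5^((r-1) div 2) + 1] (mod int r)"
    by (metis cong_sym cong_trans mult_1_right)
qed

lemma QuadRes5: "QuadRes 5 a \<longleftrightarrow> a mod 5 \<in> {0,1,4}"
proof
  assume "QuadRes 5 a"
  then obtain y where y: "[y^2 = a] (mod 5)" unfolding QuadRes_def by blast
  have "y^2 mod 5 = ((y mod 5)^2) mod 5" by (simp add: power_mod)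
  moreover have "y mod 5 \<in> {0,1,2,3,4}" by auto
  ultimately have "y^2 mod 5 \<in> {0,1,4}" by auto
  then show "a mod 5 \<in> {0,1,4}" using y unfolding cong_def by simp
next
  assume a: "a mod 5 \<in> {0,1,4}"
  have "[0^2 = a] (mod 5) \<or> [1^2 = a] (mod 5) \<or> [2^2 = a] (mod 5)"
    using a unfolding cong_def by auto
  then show "QuadRes 5 a" unfolding QuadRes_def by blast
qed

lemma Leg5:
  assumes "prime r" "r > 5"
  shows "Legendre 5 (int r) = (if r mod 5 \<in> {1,4} then 1 else -1)"
proof -
  have rm: "r mod 5 \<noteq> 0"
  proof
    assume "r mod 5 = 0"
    then have "5 dvd r" by auto
    then show False using assms primes_dvd_imp_eq[of 5 r] by auto
  qed
  have "Legendre (int 5) (int r) * Legendre (int r) (int 5) = (-1::int) ^ ((5 - 1) div 2 * ((r - 1) div 2))"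
    using assms by (intro Quadratic_Reciprocity) auto
  then have P: "Legendre 5 (int r) * Legendre (int r) 5 = 1" by simp
  have "Legendre (int r) 5 = (if r mod 5 \<in> {1,4} then 1 else -1)"
  proof -
    have rr: "int r mod 5 = int (r mod 5)" by (metis of_nat_mod of_nat_numeral)
    have nz: "\<not> [int r = 0] (mod 5)" using rm unfolding cong_def rr by simp
    have "QuadRes 5 (int r) \<longleftrightarrow> r mod 5 \<in> {1,4}"
      unfolding QuadRes5 using rm unfolding rr by auto
    then show ?thesis unfolding Legendre_def using nz by simp
  qed
  then show ?thesis using P by (auto split: if_splits simp: zmult_eq_1_iff)
qed



lemma L_plus:
  assumes "prime r" "r > 5" "r mod 5 \<in> {1,4}"
  shows "r dvd fib (r-1)" "fib (Suc (r-1)) mod r = 1 mod r"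
proof -
  have odd: "odd r" using assms primes_dvd_imp_eq[of 2 r] two_is_prime_nat by auto
  have e: "[Legendre 5 (int r) = 5^((r-1) div 2)] (mod int r)"
    using assms euler_criterion[of r 5] by auto
  have l: "Legendre 5 (int r) = 1" using Leg5[OF assms(1,2)] assms(3) by simp
  have f1: "[int (fib r) = 1] (mod int r)"
    using fib_prime_cong(1)[OF assms(1) odd] e l by (metis cong_sym cong_trans)
  have "[2 * int (fib (Suc r)) = 1 + 1] (mod int r)"
    using fib_prime_cong(2)[OF assms(1) odd] e l by (metis cong_sym cong_trans cong_add cong_refl)
  then have "[2 * int (fib (Suc r)) = 2 * 1] (mod int r)" by simp
  moreover have "coprime (2::int) (int r)"
    using odd by (simp add: coprime_commute)
  ultimately have f2: "[int (fib (Suc r)) = 1] (mod int r)" using cong_mult_lcancel by blast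
  have r2: "r = Suc (Suc (r - 2))" using assms by simp
  have "fib (Suc r) = fib r + fib (r-1)"
  proof -
    obtain s where s: "r = Suc s" using assms by (cases r) auto
    show ?thesis unfolding s by simp
  qed
  then have "int (fib (r-1)) = int (fib (Suc r)) - int (fib r)" by simp
  moreover have "[int (fib (Suc r)) - int (fib r) = 1 - 1] (mod int r)" using f1 f2 by (intro cong_diff)
  ultimately have "[int (fib (r-1)) = 1 - 1] (mod int r)" by simp
  then show "r dvd fib (r-1)" by (simp add: cong_0_iff flip: int_dvd_int_iff)
  have "Suc (r-1) = r" using assms by simp
  then show "fib (Suc (r-1)) mod r = 1 mod r"
  proof -
    have "[int (fib r) = int 1] (mod int r)" using f1 by simp
    then have "[fib r = 1] (mod r)" using cong_int_iff by blast
    then show ?thesis using \<open>Suc (r-1) = r\<close> unfolding cong_def by simp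
  qed
qed

lemma L_minus:
  assumes "prime r" "r > 5" "r mod 5 \<in> {2,3}"
  shows "r dvd fib (Suc r)" "[int (fib r) = -1] (mod int r)"
proof -
  have odd: "odd r" using assms primes_dvd_imp_eq[of 2 r] two_is_prime_nat by auto
  have e: "[Legendre 5 (int r) = 5^((r-1) div 2)] (mod int r)"
    using assms euler_criterion[of r 5] by auto
  have l: "Legendre 5 (int r) = -1" using Leg5[OF assms(1,2)] assms(3) by auto
  show f1: "[int (fib r) = -1] (mod int r)"
    using fib_prime_cong(1)[OF assms(1) odd] e l by (metis cong_sym cong_trans)
  have "[2 * int (fib (Suc r)) = -1 + 1] (mod int r)"
    using fib_prime_cong(2)[OF assms(1) odd] e l by (metis cong_sym cong_trans cong_add cong_refl)
  then have "[2 * int (fib (Suc r)) = 2 * 0] (mod int r)" by simp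
  moreover have "coprime (2::int) (int r)"
    using odd by (simp add: coprime_commute)
  ultimately have f2: "[int (fib (Suc r)) = 0] (mod int r)" using cong_mult_lcancel by blast
  then show "r dvd fib (Suc r)" by (simp add: cong_0_iff flip: int_dvd_int_iff)
qed



lemma period_fib:
  assumes "fib n mod m = 0" "fib (Suc n) mod m = 1 mod m"
  shows "fib (k + n) mod m = fib k mod m"
proof (cases k)
  case 0 then show ?thesis using assms by simp
next
  case (Suc a)
  have "fib (k + n) = fib (Suc n) * fib (Suc a) + fib n * fib a"
    using fib_add[of a n] Suc by simp
  also have "\<dots> mod m = ((fib (Suc n) mod m) * fib (Suc a) + (fib n mod m) * fib a) mod m"
    by (metis mod_add_cong mod_mult_left_eq)
  also have "\<dots> = fib k mod m" using assms Suc by (simp add: mod_mult_left_eq)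
  finally show ?thesis .
qed

lemma pisano_dvd:
  assumes "0 < n" "\<And>k. fib (k + n) mod m = fib k mod m"
  shows "pisano m dvd n"
proof -
  let ?Q = "\<lambda>k. 0 < k \<and> (\<forall>i. fib (i + k) mod m = fib i mod m)"
  have ex: "?Q n" using assms by blast
  have QP: "?Q (pisano m)" unfolding pisano_def by (rule LeastI[of ?Q, OF ex])
  define P where "P = pisano m"
  have P0: "0 < P" and Pp: "\<And>i. fib (i + P) mod m = fib i mod m" using QP P_def by auto
  have it: "fib (i + j * P) mod m = fib i mod m" for i j
  proof (induction j)
    case 0 then show ?case by simp
  next
    case (Suc j)
    have "fib (i + Suc j * P) mod m = fib ((i + j * P) + P) mod m" by (simp add: algebra_simps)
    also have "\<dots> = fib (i + j * P) mod m" by (rule Pp)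
    finally show ?case using Suc by simp
  qed
  have r: "fib (i + n mod P) mod m = fib i mod m" for i
  proof -
    have "fib (i + n mod P) mod m = fib ((i + n mod P) + (n div P) * P) mod m" by (rule it[symmetric])
    also have "(i + n mod P) + (n div P) * P = i + n" by simp
    finally show ?thesis using assms(2) by simp
  qed
  have "n mod P = 0"
  proof (rule ccontr)
    assume "n mod P \<noteq> 0"
    then have "?Q (n mod P)" using r by auto
    then have "pisano m \<le> n mod P" unfolding pisano_def by (rule Least_le)
    moreover have "n mod P < P" using P0 by simp
    ultimately show False using P_def by simp
  qed
  then show ?thesis using P_def by auto
qed

lemma rank_dvd_iff:
  assumes "0 < n0" "p dvd fib n0"
  shows "p dvd fib n \<longleftrightarrow> fib_rank p dvd n"
proof -
  let ?Q = "\<lambda>k. 0 < k \<and> p dvd fib k"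
  have QZ: "?Q (fib_rank p)" unfolding fib_rank_def by (rule LeastI[of ?Q n0]) (use assms in auto)
  define z where "z = fib_rank p"
  have z0: "0 < z" and pz: "p dvd fib z" using QZ z_def by auto
  show ?thesis
  proof
    assume "p dvd fib n"
    then have "p dvd gcd (fib z) (fib n)" using pz by simp
    then have "p dvd fib (gcd z n)" by (simp add: fib_gcd)
    moreover have "0 < gcd z n" using z0 by simp
    ultimately have "fib_rank p \<le> gcd z n" unfolding fib_rank_def by (intro Least_le) auto
    moreover have "gcd z n \<le> z" using z0 by (simp add: gcd_le1_nat)
    ultimately have "gcd z n = z" using z_def by simp
    then show "fib_rank p dvd n" using z_def by (metis gcd_dvd2)
  next
    assume "fib_rank p dvd n"
    then have "gcd z n = z" using z_def by (simp add: gcd_nat.absorb1)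
    then have "fib z = gcd (fib z) (fib n)" by (metis fib_gcd)
    then have "fib z dvd fib n" by (metis gcd_dvd2)
    then show "p dvd fib n" using pz by (rule dvd_trans[rotated])
  qed
qed



lemma not5: "prime (r::nat) \<Longrightarrow> r > 5 \<Longrightarrow> r mod 5 \<noteq> 0"
  using primes_dvd_imp_eq[of 5 r] by (auto simp: dvd_eq_mod_eq_0)

theorem theorem6p2:
  fixes q p :: nat
  assumes "prime q" and "prime (2 * q + 1)" and "q > 5"
    and "p = 2 * q + 1"
    and "fib_rank p dvd pisano q"
  shows "odd (pisano q div fib_rank p)"
proof -
  have pp: "prime p" and p5: "p > 5" using assms by auto
  have qodd: "odd q" using assms primes_dvd_imp_eq[of 2 q] two_is_prime_nat by auto
  have q5: "q mod 5 \<noteq> 0" using not5 assms by blast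
  have p5m: "p mod 5 \<noteq> 0" using not5 pp p5 by blast
  let ?z = "fib_rank p"
  let ?P = "pisano q"
  have noz: "\<not> p dvd fib d" if "d \<in> {1,2,4}" for d
  proof
    assume "p dvd fib d"
    moreover have "fib d \<in> {1,3}" using that by (auto simp: numeral_eq_Suc)
    ultimately show False using p5 by (auto dest: dvd_imp_le)
  qed
  have qp1: "?P dvd q - 1" if "q mod 5 \<in> {1,4}"
  proof (rule pisano_dvd)
    show "0 < q - 1" using assms by simp
    have "q dvd fib (q-1)" "fib (Suc (q-1)) mod q = 1 mod q" using L_plus[OF assms(1,3) that] by auto
    then show "fib (k + (q-1)) mod q = fib k mod q" for k by (intro period_fib) auto
  qed
  consider "q mod 5 = 1" | "q mod 5 = 2" | "q mod 5 = 3" | "q mod 5 = 4" using q5 by linarith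
  then show ?thesis
  proof cases
    case 1
    have pm: "p mod 5 \<in> {2,3}" using 1 assms(4) by (simp only: insert_iff empty_iff) presburger
    have "p dvd fib (Suc p)" using L_minus[OF pp p5 pm] by blast
    then have zd: "?z dvd Suc p" using rank_dvd_iff[of "Suc p" p "Suc p"] by auto
    have "?z dvd q - 1" using qp1 1 assms(5) dvd_trans by auto
    then have "?z dvd 2 * (q - 1)" by simp
    moreover have "Suc p = 2 * (q - 1) + 4" using assms by simp
    ultimately have "?z dvd 4" using zd by (metis dvd_add_right_iff)
    then have "p dvd fib 4" using rank_dvd_iff[of "Suc p" p 4] \<open>p dvd fib (Suc p)\<close> by auto
    then show ?thesis using noz by auto
  next
    case 4
    have pm: "p mod 5 \<in> {1,4}" using 4 assms(4) by (simp only: insert_iff empty_iff) presburger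
    have "p dvd fib (p-1)" using L_plus[OF pp p5 pm] by blast
    moreover have "p - 1 = 2 * q" using assms by simp
    ultimately have pf: "p dvd fib (2*q)" by simp
    then have zd: "?z dvd 2 * q" using rank_dvd_iff[of "2*q" p "2*q"] assms by auto
    have "?z dvd q - 1" using qp1 4 assms(5) dvd_trans by auto
    then have "?z dvd 2 * (q - 1)" by simp
    moreover have "2 * q = 2 * (q - 1) + 2" using assms by simp
    ultimately have "?z dvd 2" using zd by (metis dvd_add_right_iff)
    then have "p dvd fib 2" using rank_dvd_iff[of "2*q" p 2] pf assms by auto
    then show ?thesis using noz by auto
  next
    case 2
    then have "p mod 5 = 0" using assms(4) by presburger
    then show ?thesis using p5m by simp
  next
    case 3
    have pm: "p mod 5 \<in> {2,3}" using 3 assms(4) by (simp only: insert_iff empty_iff) presburger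
    have qm: "q mod 5 \<in> {2,3}" using 3 by auto
    have pf: "p dvd fib (Suc p)" using L_minus[OF pp p5 pm] by blast
    have Sp: "Suc p = 2 * (q + 1)" using assms by simp
    have zd: "?z dvd 2 * (q + 1)" using rank_dvd_iff[of "Suc p" p "Suc p"] pf Sp by auto
    have qf1: "q dvd fib (Suc q)" and qf0: "[int (fib q) = -1] (mod int q)" using L_minus[OF assms(1,3) qm] by auto
    have Pd: "?P dvd 2 * (q + 1)"
    proof (rule pisano_dvd)
      show "0 < 2 * (q + 1)" by simp
      have "fib (2 * (q+1)) = (fib (q+1 - 1) + fib (q+1 + 1)) * fib (q+1)" by (rule fib_rec_even)
      then have a: "fib (2 * (q+1)) mod q = 0" using qf1 by simp
      have "fib (Suc (2 * (q+1))) = fib (Suc (q+1)) * fib (Suc (q+1)) + fib (q+1) * fib (q+1)"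
        using fib_add[of "q+1" "q+1"] by (simp add: mult_2)
      moreover have "fib (Suc (q+1)) = fib (Suc q) + fib q" by simp
      ultimately have "int (fib (Suc (2 * (q+1)))) = (int (fib (Suc q)) + int (fib q))^2 + int (fib (Suc q))^2"
        by (simp add: power2_eq_square)
      moreover have "[(int (fib (Suc q)) + int (fib q))^2 + int (fib (Suc q))^2 = (0 + -1)^2 + 0^2] (mod int q)"
      proof -
        have "[int (fib (Suc q)) = 0] (mod int q)" using qf1 by (simp add: cong_0_iff)
        then show ?thesis using qf0 by (intro cong_add cong_pow) auto
      qed
      ultimately have "[int (fib (Suc (2 * (q+1)))) = int 1] (mod int q)" by simp
      then have "[fib (Suc (2 * (q+1))) = 1] (mod q)" using cong_int_iff by blast
      then have b: "fib (Suc (2 * (q+1))) mod q = 1 mod q" unfolding cong_def .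
      show "fib (k + 2 * (q + 1)) mod q = fib k mod q" for k using a b by (rule period_fib)
    qed
    have nz: "\<not> ?z dvd q + 1"
    proof
      assume "?z dvd q + 1"
      then have pq1: "p dvd fib (Suc q)" using rank_dvd_iff[of "Suc p" p "q+1"] pf by auto
      have fp: "[int (fib p) = -1] (mod int p)" using L_minus[OF pp p5 pm] by blast
      have "fib p = fib (Suc q) * fib (Suc q) + fib q * fib q"
        using fib_add[of q q] assms(4) by (simp add: mult_2)
      then have "[int (fib (Suc q)) * int (fib (Suc q)) + int (fib q)^2 = -1] (mod int p)"
        using fp by (simp add: power2_eq_square)
      moreover have "[int (fib (Suc q)) * int (fib (Suc q)) + int (fib q)^2 = 0 * 0 + int (fib q)^2] (mod int p)"
      proof -
        have "[int (fib (Suc q)) = 0] (mod int p)" using pq1 by (simp add: cong_0_iff)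
        then show ?thesis by (intro cong_add cong_mult) auto
      qed
      ultimately have sq: "[int (fib q)^2 = -1] (mod int p)" by (metis cong_sym cong_trans mult_zero_left add_0)
      have ndv: "\<not> p dvd fib q"
      proof
        assume "p dvd fib q"
        then have "[int (fib q)^2 = 0^2] (mod int p)" by (intro cong_pow) (simp add: cong_0_iff)
        then have "[-1 = (0::int)] (mod int p)" using sq by (metis cong_sym cong_trans power_zero_numeral)
        then have "int p dvd 1" by (simp add: cong_iff_dvd_diff)
        then show False using p5 by simp
      qed
      have "[fib q ^ (p - 1) = 1] (mod p)" using fermat_theorem[OF pp ndv] .
      then have "[int (fib q ^ (p - 1)) = int 1] (mod int p)" using cong_int_iff by blast
      then have c1: "[(int (fib q)^2)^q = 1] (mod int p)" using assms(4) by (simp add: power_mult)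
      have "[(int (fib q)^2)^q = (-1)^q] (mod int p)" using sq by (rule cong_pow)
      then have "[(int (fib q)^2)^q = -1] (mod int p)" using qodd by simp
      then have "[1 = (-1::int)] (mod int p)" using c1 by (metis cong_sym cong_trans)
      then have "int p dvd 2" by (simp add: cong_iff_dvd_diff)
      then show False using p5 by (auto dest: zdvd_imp_le)
    qed
    show ?thesis
    proof
      assume ev: "even (?P div ?z)"
      obtain k where Pk: "?P = ?z * k" using assms(5) by blast
      have z0: "?z > 0" proof (rule ccontr)
        assume "\<not> ?z > 0" then have "?z = 0" by simp
        then show False using zd by simp
      qed
      then have "?P div ?z = k" using Pk by simp
      then obtain j where "k = 2 * j" using ev by blast
      then have "?z * j * 2 dvd (q + 1) * 2" using Pd Pk by (simp add: ac_simps)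
      then have "?z * j dvd q + 1" by (metis nat_mult_dvd_cancel1 pos2 mult.commute)
      then show False using nz by (meson dvd_mult_left)
    qed
  qed
qed


end
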